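(* Let $f:\mathbb{R}^n\to\mathbb{R}$ be continuously differentiable and bounded below, let $s$ be an integer with $0<s<n$, and let $\{\mathbf{x}^k\}$ be the sequence generated by the partial sparse-simplex method. Then any accumulation point of $\{\mathbf{x}^k\}$ is a BF vector of the problem (P): minimize $f(\mathbf{x})$ subject to $\|\mathbf{x}\|_0\le s$.
   Context: $\|\mathbf{x}\|_0$ is the number of nonzero components, $C_s=\{\mathbf{x}:\|\mathbf{x}\|_0\le s\}$, $I_1(\mathbf{x})=\{i:x_i\neq0\}$, $I_0(\mathbf{x})=\{i:x_i=0\}$, $\mathbf{e}_i$ the $i$-th standard basis vector. Partial sparse-simplex method (all one-dimensional minima assumed attained): choose $\mathbf{x}^0\in C_s$. At step $k$: if $\|\mathbf{x}^k\|_0<s$, for each $i=1,\dots,n$ let $t_i\in\operatorname{argmin}_t f(\mathbf{x}^k+t\mathbf{e}_i)$, $f_i=\min_t f(\mathbf{x}^k+t\mathbf{e}_i)$, $i_k\in\operatorname{argmin}_i f_i$; if $f_{i_k}<f(\mathbf{x}^k)$ set $\mathbf{x}^{k+1}=\mathbf{x}^k+t_{i_k}\mathbf{e}_{i_k}$, else stop. If $\|\mathbf{x}^k\|_0=s$: for $i\in I_1(\mathbf{x}^k)$ let $f_i=\min_t f(\mathbf{x}^k+t\mathbf{e}_i)$; let $i_k^1\in\operatorname{argmin}\{f_i:i\in I_1(\mathbf{x}^k)\}$, $i_k^2\in\operatorname{argmax}\{|\nabla_i f(\mathbf{x}^k)|:i\in I_0(\mathbf{x}^k)\}$, $m_k\in\operatorname{argmin}\{|x_i^k|:i\in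 I_1(\mathbf{x}^k)\}$; let $D_k^1=\min_t f(\mathbf{x}^k+t\mathbf{e}_{i_k^1})$ with minimizer $T_k^1$, and $D_k^2=\min_t f(\mathbf{x}^k-x^k_{m_k}\mathbf{e}_{m_k}+t\mathbf{e}_{i_k^2})$ with minimizer $T_k^2$; if $D_k^1<D_k^2$ set $\mathbf{x}^{k+1}=\mathbf{x}^k+T_k^1\mathbf{e}_{i_k^1}$, else $\mathbf{x}^{k+1}=\mathbf{x}^k-x^k_{m_k}\mathbf{e}_{m_k}+T_k^2\mathbf{e}_{i_k^2}$. A vector $\mathbf{x}^*\in C_s$ is a basic feasible (BF) vector of (P) if: when $\|\mathbf{x}^*\|_0<s$, $\nabla f(\mathbf{x}^* )=0$; and when $\|\mathbf{x}^*\|_0=s$, $\nabla_i f(\mathbf{x}^* )=0$ for all $i\in I_1(\mathbf{x}^* )$. *)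

theory Defs
  imports "HOL-Analysis.Analysis"
begin

text \<open>Vectors in R^n are modelled as real^'n; the standard basis vector e_i is axis i 1.\<close>

definition l0norm :: "real^'n \<Rightarrow> nat" where
  "l0norm x = card {i. x $ i \<noteq> 0}"

definition Cs :: "nat \<Rightarrow> (real^'n) set" where
  "Cs s = {x. l0norm x \<le> s}"

definition I1 :: "real^'n \<Rightarrow> 'n set" where
  "I1 x = {i. x $ i \<noteq> 0}"

definition I0 :: "real^'n \<Rightarrow> 'n set" where
  "I0 x = {i. x $ i = 0}"

definition is_line_argmin :: "(real^'n \<Rightarrow> real) \<Rightarrow> real^'n \<Rightarrow> 'n \<Rightarrow> real \<Rightarrow> bool" where
  "is_line_argmin f y i t \<longleftrightarrow> (\<forall>u. f (y + t *\<^sub>R axis i 1) \<le> f (y + u *\<^sub>R axis i 1))"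

definition line_min :: "(real^'n \<Rightarrow> real) \<Rightarrow> real^'n \<Rightarrow> 'n \<Rightarrow> real" where
  "line_min f y i = (INF u. f (y + u *\<^sub>R axis i 1))"

text \<open>One step x -> x' of the partial sparse-simplex method; g is the gradient of f.
  If the method stops at x (case l0norm x < s and no improvement), the sequence is
  continued constantly, x' = x.\<close>
definition pss_step :: "(real^'n \<Rightarrow> real) \<Rightarrow> (real^'n \<Rightarrow> real^'n) \<Rightarrow> nat
    \<Rightarrow> real^'n \<Rightarrow> real^'n \<Rightarrow> bool" where
  "pss_step f g s x x' \<longleftrightarrow>
    (if l0norm x < s then
       (\<exists>t ik. (\<forall>i. is_line_argmin f x i (t i)) \<and>
          (\<forall>i. line_min f x ik \<le> line_min f x i) \<and>
          (if line_min f x ik < f x then x' = x + t ik *\<^sub>R axis ik 1 else x' = x))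
     else
       (\<exists>i1 i2 m T1 T2.
          i1 \<in> I1 x \<and> (\<forall>i\<in>I1 x. line_min f x i1 \<le> line_min f x i) \<and>
          i2 \<in> I0 x \<and> (\<forall>i\<in>I0 x. \<bar>g x $ i\<bar> \<le> \<bar>g x $ i2\<bar>) \<and>
          m \<in> I1 x \<and> (\<forall>i\<in>I1 x. \<bar>x $ m\<bar> \<le> \<bar>x $ i\<bar>) \<and>
          is_line_argmin f x i1 T1 \<and>
          is_line_argmin f (x - (x $ m) *\<^sub>R axis m 1) i2 T2 \<and>
          (let D1 = f (x + T1 *\<^sub>R axis i1 1);
               D2 = f (x - (x $ m) *\<^sub>R axis m 1 + T2 *\<^sub>R axis i2 1)
           in if D1 < D2 then x' = x + T1 *\<^sub>R axis i1 1
              else x' = x - (x $ m) *\<^sub>R axis m 1 + T2 *\<^sub>R axis i2 1)))"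

definition BF_vector :: "(real^'n \<Rightarrow> real^'n) \<Rightarrow> nat \<Rightarrow> real^'n \<Rightarrow> bool" where
  "BF_vector g s x \<longleftrightarrow> x \<in> Cs s \<and>
     (l0norm x < s \<longrightarrow> g x = 0) \<and>
     (l0norm x = s \<longrightarrow> (\<forall>i\<in>I1 x. g x $ i = 0))"

end

theory Submission
  imports Defs
begin

lemma line_min_eq:
  assumes "is_line_argmin f y i t"
  shows "line_min f y i = f (y + t *\<^sub>R axis i 1)"
  using assms unfolding line_min_def is_line_argmin_def
  by (intro cInf_eq_minimum) auto

lemma line_min_le:
  assumes "\<And>y i. \<exists>t. is_line_argmin f y i t"
  shows "line_min f y i \<le> f (y + u *\<^sub>R axis i 1)"
proof -
  obtain t where t: "is_line_argmin f y i t" using assms by blast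
  show ?thesis using line_min_eq[OF t] t unfolding is_line_argmin_def by simp
qed

lemma supp_add_axis:
  "I1 (y + c *\<^sub>R axis i 1) \<subseteq> I1 y \<union> {i}"
  unfolding I1_def by (auto simp: axis_def)

lemma supp_swap:
  "I1 (y - (y $ m) *\<^sub>R axis m 1 + c *\<^sub>R axis i 1) \<subseteq> (I1 y - {m}) \<union> {i}"
  unfolding I1_def by (auto simp: axis_def)

lemma l0_I1: "l0norm y = card (I1 y)"
  unfolding l0norm_def I1_def by simp

lemma card_le_aux:
  fixes A :: "'n::finite set"
  assumes "A \<subseteq> B \<union> {i}"
  shows "card A \<le> card B + 1"
proof -
  have "card A \<le> card (B \<union> {i})" using assms by (intro card_mono) auto
  also have "\<dots> \<le> card B + card {i}" by (rule card_Un_le)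
  finally show ?thesis by simp
qed

lemma step_facts:
  fixes f :: "real^'n \<Rightarrow> real"
  assumes att: "\<And>y i. \<exists>t. is_line_argmin f y i t"
    and st: "pss_step f g s y y'" and bd: "l0norm y \<le> s"
  shows "f y' \<le> f y" and "l0norm y' \<le> s"
    and "l0norm y < s \<Longrightarrow> f y' \<le> f (y + u *\<^sub>R axis i 1)"
    and "l0norm y = s \<Longrightarrow> i \<in> I1 y \<Longrightarrow> f y' \<le> f (y + u *\<^sub>R axis i 1)"
    and "l0norm y = s \<Longrightarrow> \<exists>m c. m \<in> I1 y \<and> (\<forall>i\<in>I1 y. \<bar>y $ m\<bar> \<le> \<bar>y $ i\<bar>) \<and>
           c \<in> I0 y \<and> (\<forall>i\<in>I0 y. \<bar>g y $ i\<bar> \<le> \<bar>g y $ c\<bar>) \<and>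
           (\<forall>t. f y' \<le> f (y - (y $ m) *\<^sub>R axis m 1 + t *\<^sub>R axis c 1))"
proof -
  have A: "(f y' \<le> f y \<and> l0norm y' \<le> s \<and> (\<forall>i u. f y' \<le> f (y + u *\<^sub>R axis i 1)))"
    if lt: "l0norm y < s"
  proof -
    from st lt obtain t ik where t: "\<forall>i. is_line_argmin f y i (t i)"
      and ik: "\<forall>i. line_min f y ik \<le> line_min f y i"
      and nx: "if line_min f y ik < f y then y' = y + t ik *\<^sub>R axis ik 1 else y' = y"
      unfolding pss_step_def by auto
    have le: "f y' \<le> line_min f y ik"
      using nx line_min_eq[OF t[rule_format, of ik]] by (auto split: if_splits)
    have "line_min f y ik \<le> f y" using line_min_le[OF att, of y ik 0] by simp
    moreover have "l0norm y' \<le> s"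
    proof (cases "line_min f y ik < f y")
      case True
      then have "y' = y + t ik *\<^sub>R axis ik 1" using nx by simp
      then have "card (I1 y') \<le> card (I1 y) + 1"
        using card_le_aux[OF supp_add_axis[of y "t ik" ik]] by simp
      then show ?thesis using lt by (simp add: l0_I1)
    next
      case False then show ?thesis using nx bd by simp
    qed
    moreover have "\<forall>i u. f y' \<le> f (y + u *\<^sub>R axis i 1)"
      using le ik line_min_le[OF att] by (meson order_trans)
    ultimately show ?thesis using le by (meson order_trans)
  qed
  have B: "f y' \<le> f y \<and> l0norm y' \<le> s \<and> (\<forall>i\<in>I1 y. \<forall>u. f y' \<le> f (y + u *\<^sub>R axis i 1)) \<and>
           (\<exists>m c. m \<in> I1 y \<and> (\<forall>i\<in>I1 y. \<bar>y $ m\<bar> \<le> \<bar>y $ i\<bar>) \<and>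
           c \<in> I0 y \<and> (\<forall>i\<in>I0 y. \<bar>g y $ i\<bar> \<le> \<bar>g y $ c\<bar>) \<and>
           (\<forall>t. f y' \<le> f (y - (y $ m) *\<^sub>R axis m 1 + t *\<^sub>R axis c 1)))"
    if eq: "l0norm y = s"
  proof -
    from st eq obtain i1 i2 m T1 T2 where
      i1: "i1 \<in> I1 y" "\<forall>i\<in>I1 y. line_min f y i1 \<le> line_min f y i"
      and i2: "i2 \<in> I0 y" "\<forall>i\<in>I0 y. \<bar>g y $ i\<bar> \<le> \<bar>g y $ i2\<bar>"
      and m: "m \<in> I1 y" "\<forall>i\<in>I1 y. \<bar>y $ m\<bar> \<le> \<bar>y $ i\<bar>"
      and T1: "is_line_argmin f y i1 T1"
      and T2: "is_line_argmin f (y - (y $ m) *\<^sub>R axis m 1) i2 T2"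
      and nx: "(let D1 = f (y + T1 *\<^sub>R axis i1 1);
               D2 = f (y - (y $ m) *\<^sub>R axis m 1 + T2 *\<^sub>R axis i2 1)
           in if D1 < D2 then y' = y + T1 *\<^sub>R axis i1 1
              else y' = y - (y $ m) *\<^sub>R axis m 1 + T2 *\<^sub>R axis i2 1)"
      unfolding pss_step_def by auto
    define D1 where "D1 = f (y + T1 *\<^sub>R axis i1 1)"
    define D2 where "D2 = f (y - (y $ m) *\<^sub>R axis m 1 + T2 *\<^sub>R axis i2 1)"
    have fy': "f y' \<le> D1 \<and> f y' \<le> D2"
      using nx unfolding D1_def[symmetric] D2_def[symmetric] Let_def
      by (auto split: if_splits simp: D1_def D2_def)
    have D1: "D1 = line_min f y i1" using line_min_eq[OF T1] D1_def by simp
    have "D1 \<le> f y" using D1 line_min_le[OF att, of y i1 0] by simp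
    moreover have "l0norm y' \<le> s"
    proof (cases "D1 < D2")
      case True
      then have "y' = y + T1 *\<^sub>R axis i1 1" using nx unfolding D1_def D2_def Let_def by simp
      then have "I1 y' \<subseteq> I1 y" using supp_add_axis[of y T1 i1] i1(1) by auto
      then have "card (I1 y') \<le> card (I1 y)" by (intro card_mono) auto
      then show ?thesis using eq by (simp add: l0_I1)
    next
      case False
      then have "y' = y - (y $ m) *\<^sub>R axis m 1 + T2 *\<^sub>R axis i2 1"
        using nx unfolding D1_def D2_def Let_def by simp
      then have "card (I1 y') \<le> card (I1 y - {m}) + 1"
        using card_le_aux[OF supp_swap[of y m T2 i2]] by simp
      also have "\<dots> = card (I1 y)" using m(1)
        by (simp add: card_Diff_singleton) (metis Suc_pred card_gt_0_iff empty_iff finite)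
      finally show ?thesis using eq by (simp add: l0_I1)
    qed
    moreover have "\<forall>i\<in>I1 y. \<forall>u. f y' \<le> f (y + u *\<^sub>R axis i 1)"
      using fy' D1 i1(2) line_min_le[OF att] by (meson order_trans)
    moreover have "\<forall>t. f y' \<le> f (y - (y $ m) *\<^sub>R axis m 1 + t *\<^sub>R axis i2 1)"
      using fy' T2 unfolding D2_def is_line_argmin_def by (meson order_trans)
    ultimately show ?thesis using fy' i2 m by (meson order_trans)
  qed
  show "f y' \<le> f y" using A B bd by fastforce
  show "l0norm y' \<le> s" using A B bd by fastforce
  show "l0norm y < s \<Longrightarrow> f y' \<le> f (y + u *\<^sub>R axis i 1)" using A by blast
  show "l0norm y = s \<Longrightarrow> i \<in> I1 y \<Longrightarrow> f y' \<le> f (y + u *\<^sub>R axis i 1)" using B by blast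
  show "l0norm y = s \<Longrightarrow> \<exists>m c. m \<in> I1 y \<and> (\<forall>i\<in>I1 y. \<bar>y $ m\<bar> \<le> \<bar>y $ i\<bar>) \<and>
           c \<in> I0 y \<and> (\<forall>i\<in>I0 y. \<bar>g y $ i\<bar> \<le> \<bar>g y $ c\<bar>) \<and>
           (\<forall>t. f y' \<le> f (y - (y $ m) *\<^sub>R axis m 1 + t *\<^sub>R axis c 1))" using B by blast
qed


lemma opt_coord:
  fixes f :: "real^'n \<Rightarrow> real"
  assumes grad: "(f has_derivative (\<lambda>h. g \<bullet> h)) (at y)"
    and mn: "\<forall>t. f y \<le> f (y + t *\<^sub>R axis i 1)"
  shows "g $ i = 0"
proof -
  have d1: "((\<lambda>t::real. y + t *\<^sub>R axis i 1) has_derivative (\<lambda>h. h *\<^sub>R axis i 1)) (at 0)"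
    by (auto intro!: derivative_eq_intros)
  have "((\<lambda>t. f (y + t *\<^sub>R axis i 1)) has_derivative (\<lambda>h. g \<bullet> (h *\<^sub>R axis i 1))) (at 0)"
  proof -
    have g0: "(f has_derivative (\<lambda>h. g \<bullet> h)) (at (y + 0 *\<^sub>R axis i 1))" using grad by simp
    show ?thesis using has_derivative_compose[OF d1 g0] by (simp add: o_def)
  qed
  moreover have "(\<lambda>h. g \<bullet> (h *\<^sub>R axis i 1)) = (\<lambda>h. h * (g $ i))"
    by (simp add: inner_axis inner_scaleR_right mult.commute)
  ultimately have "((\<lambda>t. f (y + t *\<^sub>R axis i 1)) has_real_derivative (g $ i)) (at 0)"
    unfolding has_field_derivative_def by (simp add: mult.commute[of _ "g $ i"])
  then show ?thesis
    by (rule DERIV_local_min[where d=1]) (use mn in auto)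
qed

lemma lim_line:
  fixes f :: "real^'n \<Rightarrow> real"
  assumes contf: "continuous_on UNIV f"
    and X: "X \<longlonglongrightarrow> p" and eps: "\<epsilon> \<longlonglongrightarrow> 0" and fX': "(\<lambda>j. f (X' j)) \<longlonglongrightarrow> f p"
    and fr: "frequently (\<lambda>j. \<exists>z. norm (z - X j) \<le> \<epsilon> j \<and> f (X' j) \<le> f (z + t *\<^sub>R axis i 1)) sequentially"
  shows "f p \<le> f (p + t *\<^sub>R axis i 1)"
proof (rule ccontr)
  define q where "q = p + t *\<^sub>R axis i 1"
  assume "\<not> f p \<le> f (p + t *\<^sub>R axis i 1)"
  then have lt: "f q < f p" unfolding q_def by simp
  define \<eta> where "\<eta> = (f p - f q) / 2"
  have eta: "\<eta> > 0" using lt unfolding \<eta>_def by simp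
  obtain \<delta> where d: "\<delta> > 0" and dd: "\<And>w. dist w q < \<delta> \<Longrightarrow> dist (f w) (f q) < \<eta>"
    using contf eta unfolding continuous_on_iff by blast
  have e1: "eventually (\<lambda>j. dist (X j) p < \<delta>/2) sequentially" using X d by (intro tendstoD) auto
  have e2: "eventually (\<lambda>j. dist (\<epsilon> j) 0 < \<delta>/2) sequentially" using eps d by (intro tendstoD) auto
  have e3: "eventually (\<lambda>j. dist (f (X' j)) (f p) < \<eta>) sequentially" using fX' eta by (intro tendstoD) auto
  have "eventually (\<lambda>j. \<not> (\<exists>z. norm (z - X j) \<le> \<epsilon> j \<and> f (X' j) \<le> f (z + t *\<^sub>R axis i 1))) sequentially"
    using e1 e2 e3
  proof eventually_elim
    case (elim j)
    show ?case
    proof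
      assume "\<exists>z. norm (z - X j) \<le> \<epsilon> j \<and> f (X' j) \<le> f (z + t *\<^sub>R axis i 1)"
      then obtain z where z1: "norm (z - X j) \<le> \<epsilon> j" and z2: "f (X' j) \<le> f (z + t *\<^sub>R axis i 1)" by blast
      have "dist (z + t *\<^sub>R axis i 1) q = norm (z - p)" unfolding q_def dist_norm by (simp add: algebra_simps)
      also have "\<dots> \<le> norm (z - X j) + norm (X j - p)" by (metis dist_norm dist_triangle)
      also have "\<dots> < \<delta>" using z1 elim by (simp add: dist_norm)
      finally have "dist (f (z + t *\<^sub>R axis i 1)) (f q) < \<eta>" by (rule dd)
      then show False using z2 elim(3) unfolding dist_real_def \<eta>_def by (simp add: abs_if split: if_splits)
    qed
  qed
  then show False using fr unfolding frequently_def by simp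
qed

lemma lim_le_freq:
  fixes a b :: "nat \<Rightarrow> real"
  assumes "a \<longlonglongrightarrow> A" "b \<longlonglongrightarrow> B" "frequently (\<lambda>j. a j \<le> b j) sequentially"
  shows "A \<le> B"
proof (rule ccontr)
  assume "\<not> A \<le> B"
  then have "(\<lambda>j. a j - b j) \<longlonglongrightarrow> A - B" "A - B > 0" using assms by (auto intro: tendsto_diff)
  then have "eventually (\<lambda>j. a j - b j > 0) sequentially" by (rule order_tendstoD)
  then have "eventually (\<lambda>j. \<not> a j \<le> b j) sequentially" by eventually_elim auto
  then show False using assms(3) unfolding frequently_def by simp
qed


theorem lemma3p3:
  fixes f :: "real^'n \<Rightarrow> real" and g :: "real^'n \<Rightarrow> real^'n"
    and s :: nat and x :: "nat \<Rightarrow> real^'n" and p :: "real^'n"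
  assumes grad: "\<And>y. (f has_derivative (\<lambda>h. g y \<bullet> h)) (at y)"
    and C1: "continuous_on UNIV g"
    and bdd: "bdd_below (range f)"
    and s_pos: "0 < s" and s_less: "s < CARD('n)"
    and attained: "\<And>y i. \<exists>t. is_line_argmin f y i t"
    and init: "x 0 \<in> Cs s"
    and steps: "\<And>k. pss_step f g s (x k) (x (Suc k))"
    and accum: "\<exists>r. strict_mono r \<and> (x \<circ> r) \<longlonglongrightarrow> p"
  shows "BF_vector g s p"
proof -
  obtain r where r: "strict_mono r" and xr: "(x \<circ> r) \<longlonglongrightarrow> p" using accum by blast
  have iscf: "\<And>y. isCont f y" using grad has_derivative_continuous by blast
  have contf: "continuous_on UNIV f" using iscf by (simp add: continuous_on_eq_continuous_at)
  have iscg: "\<And>y. isCont g y" using C1 by (simp add: continuous_on_eq_continuous_at)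
  have inv: "\<And>k. l0norm (x k) \<le> s"
  proof -
    fix k show "l0norm (x k) \<le> s"
    proof (induction k)
      case 0 then show ?case using init by (simp add: Cs_def)
    next
      case (Suc k) then show ?case using step_facts(2)[OF attained steps] by blast
    qed
  qed
  note SF = step_facts[OF attained steps inv]
  define X where "X j = x (r j)" for j
  define X' where "X' j = x (Suc (r j))" for j
  have XL: "X \<longlonglongrightarrow> p" using xr unfolding X_def o_def by simp
  have fX: "(\<lambda>j. f (X j)) \<longlonglongrightarrow> f p" using isCont_tendsto_compose[OF iscf XL] .
  have fX': "(\<lambda>j. f (X' j)) \<longlonglongrightarrow> f p"
  proof (rule tendsto_sandwich[OF _ _ LIMSEQ_Suc[OF fX] fX])
    have "\<And>j. Suc (r j) \<le> r (Suc j)" using r by (simp add: strict_mono_def Suc_leI)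
    then show "\<forall>\<^sub>F j in sequentially. f (X (Suc j)) \<le> f (X' j)"
      unfolding X_def X'_def using lift_Suc_antimono_le[of "\<lambda>k. f (x k)", OF SF(1)] by auto
    show "\<forall>\<^sub>F j in sequentially. f (X' j) \<le> f (X j)"
      unfolding X_def X'_def using SF(1) by auto
  qed
  have gX: "\<And>i. (\<lambda>j. g (X j) $ i) \<longlonglongrightarrow> g p $ i"
    using tendsto_vec_nth[OF isCont_tendsto_compose[OF iscg XL]] .
  have XiL: "\<And>i. (\<lambda>j. X j $ i) \<longlonglongrightarrow> p $ i" using tendsto_vec_nth[OF XL] .
  have Xinv: "\<And>j. l0norm (X j) \<le> s" unfolding X_def by (rule inv)
  have key: "g p $ i = 0"
    if fr: "frequently (\<lambda>j. \<forall>t. f (X' j) \<le> f (X j + t *\<^sub>R axis i 1)) sequentially" for i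
  proof (rule opt_coord[OF grad[of p]], intro allI)
    fix t
    show "f p \<le> f (p + t *\<^sub>R axis i 1)"
    proof (rule lim_line[OF contf XL tendsto_const fX'])
      show "\<exists>\<^sub>F j in sequentially. \<exists>z. norm (z - X j) \<le> (0::real) \<and> f (X' j) \<le> f (z + t *\<^sub>R axis i 1)"
        using fr by (rule frequently_elim1) auto
    qed
  qed
  have evsub: "eventually (\<lambda>j. I1 p \<subseteq> I1 (X j)) sequentially"
  proof -
    have "\<And>i. eventually (\<lambda>j. p $ i \<noteq> 0 \<longrightarrow> X j $ i \<noteq> 0) sequentially"
    proof -
      fix i show "eventually (\<lambda>j. p $ i \<noteq> 0 \<longrightarrow> X j $ i \<noteq> 0) sequentially"
      proof (cases "p $ i = 0")
        case True then show ?thesis by simp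
      next
        case False
        then show ?thesis using tendsto_imp_eventually_ne[OF XiL[of i], of 0] by (auto elim: eventually_mono)
      qed
    qed
    then have "eventually (\<lambda>j. \<forall>i. p $ i \<noteq> 0 \<longrightarrow> X j $ i \<noteq> 0) sequentially"
      by (rule eventually_all_finite)
    then show ?thesis by eventually_elim (auto simp: I1_def)
  qed
  have cardp: "card (I1 p) \<le> s"
  proof -
    obtain N where "\<And>j. j \<ge> N \<Longrightarrow> I1 p \<subseteq> I1 (X j)" using evsub by (auto simp: eventually_sequentially)
    then have "card (I1 p) \<le> card (I1 (X N))" by (intro card_mono) auto
    then show ?thesis using Xinv[of N] by (simp add: l0_I1)
  qed
  have G1: "p \<in> Cs s" using cardp by (simp add: Cs_def l0_I1)
  have G3: "\<forall>i\<in>I1 p. g p $ i = 0" if eq: "l0norm p = s"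
  proof
    fix i assume i: "i \<in> I1 p"
    have "eventually (\<lambda>j. I1 (X j) = I1 p \<and> l0norm (X j) = s) sequentially"
      using evsub
    proof eventually_elim
      case (elim j)
      have "I1 p = I1 (X j)"
        using elim Xinv[of j] eq by (intro card_seteq) (auto simp: l0_I1)
      then show ?case using eq by (simp add: l0_I1)
    qed
    then have "eventually (\<lambda>j. \<forall>t. f (X' j) \<le> f (X j + t *\<^sub>R axis i 1)) sequentially"
      by eventually_elim (use i SF(4) in \<open>auto simp: X_def X'_def\<close>)
    then show "g p $ i = 0" by (intro key eventually_frequently) auto
  qed
  have G2: "g p = 0" if lt: "l0norm p < s"
  proof (cases "frequently (\<lambda>j. l0norm (X j) < s) sequentially")
    case True
    have "g p $ i = 0" for i
      using True by (intro key, elim frequently_elim1) (use SF(3) in \<open>auto simp: X_def X'_def\<close>)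
    then show ?thesis by (simp add: vec_eq_iff)
  next
    case False
    then have evs: "eventually (\<lambda>j. l0norm (X j) = s) sequentially"
      unfolding not_frequently by eventually_elim (use Xinv in \<open>auto simp: le_less\<close>)
    define \<epsilon> where "\<epsilon> j = (\<Sum>i\<in>{i. p $ i = 0}. \<bar>X j $ i\<bar>)" for j
    have epsL: "\<epsilon> \<longlonglongrightarrow> 0"
    proof -
      have "\<epsilon> \<longlonglongrightarrow> (\<Sum>i\<in>{i. p $ i = 0}. \<bar>p $ i\<bar>)"
        unfolding \<epsilon>_def by (intro tendsto_sum tendsto_rabs XiL)
      then show ?thesis by simp
    qed
    define Q where "Q j c \<longleftrightarrow> c \<in> I0 (X j) \<and> (\<forall>i'\<in>I0 (X j). \<bar>g (X j) $ i'\<bar> \<le> \<bar>g (X j) $ c\<bar>) \<and>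
        (\<forall>t. \<exists>z. norm (z - X j) \<le> \<epsilon> j \<and> f (X' j) \<le> f (z + t *\<^sub>R axis c 1))" for j c
    have evQ: "eventually (\<lambda>j. \<exists>c. Q j c) sequentially"
      using evs
    proof eventually_elim
      case (elim j)
      obtain m c where m: "m \<in> I1 (X j)" "\<forall>i\<in>I1 (X j). \<bar>X j $ m\<bar> \<le> \<bar>X j $ i\<bar>"
        and c: "c \<in> I0 (X j)" "\<forall>i\<in>I0 (X j). \<bar>g (X j) $ i\<bar> \<le> \<bar>g (X j) $ c\<bar>"
        and ft: "\<forall>t. f (X' j) \<le> f (X j - (X j $ m) *\<^sub>R axis m 1 + t *\<^sub>R axis c 1)"
        using SF(5)[of "r j"] elim unfolding X_def X'_def by blast
      have "\<not> I1 (X j) \<subseteq> I1 p"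
      proof
        assume "I1 (X j) \<subseteq> I1 p"
        then have "card (I1 (X j)) \<le> card (I1 p)" by (intro card_mono) auto
        then show False using elim lt by (simp add: l0_I1)
      qed
      then obtain i0 where i0: "i0 \<in> I1 (X j)" "p $ i0 = 0" by (auto simp: I1_def)
      have "\<bar>X j $ m\<bar> \<le> \<bar>X j $ i0\<bar>" using m i0 by blast
      also have "\<dots> \<le> \<epsilon> j" unfolding \<epsilon>_def using i0 by (intro member_le_sum) auto
      finally have me: "\<bar>X j $ m\<bar> \<le> \<epsilon> j" .
      have "norm ((X j - (X j $ m) *\<^sub>R axis m 1) - X j) = \<bar>X j $ m\<bar>" by (simp add: norm_axis_1)
      then have "Q j c" unfolding Q_def using c ft me by (metis order_refl)
      then show ?case by blast
    qed
    have "\<exists>c. frequently (\<lambda>j. Q j c) sequentially"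
    proof (rule ccontr)
      assume "\<nexists>c. frequently (\<lambda>j. Q j c) sequentially"
      then have "\<And>c. eventually (\<lambda>j. \<not> Q j c) sequentially" by (simp add: not_frequently[symmetric])
      then have "eventually (\<lambda>j. \<forall>c. \<not> Q j c) sequentially" by (rule eventually_all_finite)
      with evQ have "eventually (\<lambda>j. False) sequentially" by eventually_elim blast
      then show False by simp
    qed
    then obtain c where frQ: "frequently (\<lambda>j. Q j c) sequentially" by blast
    have gc: "g p $ c = 0"
    proof (rule opt_coord[OF grad[of p]], intro allI)
      fix t
      show "f p \<le> f (p + t *\<^sub>R axis c 1)"
        by (rule lim_line[OF contf XL epsL fX'], rule frequently_elim1[OF frQ]) (auto simp: Q_def)
    qed
    have "g p $ i = 0" for i
    proof (cases "frequently (\<lambda>j. i \<in> I1 (X j)) sequentially")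
      case True
      have "eventually (\<lambda>j. i \<in> I1 (X j) \<longrightarrow> (\<forall>t. f (X' j) \<le> f (X j + t *\<^sub>R axis i 1))) sequentially"
        using evs by eventually_elim (use SF(4) in \<open>auto simp: X_def X'_def\<close>)
      then show ?thesis by (intro key) (rule frequently_mp[OF _ True])
    next
      case False
      then have ev0: "eventually (\<lambda>j. i \<in> I0 (X j)) sequentially"
        unfolding not_frequently by eventually_elim (auto simp: I1_def I0_def)
      have "eventually (\<lambda>j. Q j c \<longrightarrow> \<bar>g (X j) $ i\<bar> \<le> \<bar>g (X j) $ c\<bar>) sequentially"
        using ev0 by eventually_elim (auto simp: Q_def)
      then have "frequently (\<lambda>j. \<bar>g (X j) $ i\<bar> \<le> \<bar>g (X j) $ c\<bar>) sequentially"
        using frQ by (rule frequently_mp)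
      then have "\<bar>g p $ i\<bar> \<le> \<bar>g p $ c\<bar>"
        by (intro lim_le_freq[OF tendsto_rabs[OF gX] tendsto_rabs[OF gX]])
      then show ?thesis using gc by simp
    qed
    then show ?thesis by (simp add: vec_eq_iff)
  qed
  show ?thesis unfolding BF_vector_def using G1 G2 G3 by blast
qed

end
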